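(* Let $v=v_1\cdots v_n$ be a word of distinct positive integers avoiding $31425,32415,31524,32514$, with positions of left-to-right maxima $a_1<\dots<a_h$ and of right-to-left maxima $b_1<\dots<b_g$ ($a_h=b_1$). Assume $g>1$, $a_h>h$, $h>2$ and $v_{a_{h-1}}>v_{b_2}$. Let $x=\max(\{j:1\le j<a_{h-1},\ v_j>v_{j+1}\}\cup\{0\})$. Then one of the following holds: (B-1) $x=0$; (B-2) $x\ne0$ and $a_h=a_{h-1}+1$; moreover, if $v_{b_2}>v_x$ then $v_x<v_j<v_{b_2}$ for all $a_h<j<b_2$; (B-3) $x\ne 0$, $a_h>a_{h-1}+1$, and $v_x<v_j<v_{a_{h-1}}$ for all $a_{h-1}<j<a_h$; moreover, if $v_{b_2}>v_x$ then $v_x<v_j<v_{b_2}$ for all $a_h<j<b_2$.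
   Context: A word of distinct positive integers avoids a pattern $P$ (a permutation of $[m]$) if no subsequence of length $m$ is order-isomorphic to $P$. A left-to-right (resp. right-to-left) maximum of $v$ is a letter $v_i$ greater than all letters to its left (resp. right). *)

theory Defs
  imports Main
begin

text \<open>Words are lists of natural numbers; positions are 1-based: letter i of v is v_i.\<close>

definition letter :: "nat list \<Rightarrow> nat \<Rightarrow> nat" where
  "letter v i = v ! (i - 1)"

definition contains_pattern :: "nat list \<Rightarrow> nat list \<Rightarrow> bool" where
  "contains_pattern P w \<longleftrightarrow>
     (\<exists>idx. length idx = length P \<and> sorted_wrt (<) idx \<and> (\<forall>i\<in>set idx. i < length w) \<and>
        (\<forall>k < length P. \<forall>l < length P. (w ! (idx ! k) < w ! (idx ! l)) \<longleftrightarrow> (P ! k < P ! l)))"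

definition avoids :: "nat list \<Rightarrow> nat list \<Rightarrow> bool" where
  "avoids w P \<longleftrightarrow> \<not> contains_pattern P w"

definition ltr_max_pos :: "nat list \<Rightarrow> nat list" where
  "ltr_max_pos v = sorted_list_of_set
     {i. 1 \<le> i \<and> i \<le> length v \<and> (\<forall>j. 1 \<le> j \<and> j < i \<longrightarrow> letter v j < letter v i)}"

definition rtl_max_pos :: "nat list \<Rightarrow> nat list" where
  "rtl_max_pos v = sorted_list_of_set
     {i. 1 \<le> i \<and> i \<le> length v \<and> (\<forall>j. i < j \<and> j \<le> length v \<longrightarrow> letter v j < letter v i)}"

end

theory Submission
  imports Defs
begin

definition LS :: "nat list \<Rightarrow> nat set" where
  "LS v = {i. 1 \<le> i \<and> i \<le> length v \<and> (\<forall>j. 1 \<le> j \<and> j < i \<longrightarrow> letter v j < letter v i)}"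
definition RS :: "nat list \<Rightarrow> nat set" where
  "RS v = {i. 1 \<le> i \<and> i \<le> length v \<and> (\<forall>j. i < j \<and> j \<le> length v \<longrightarrow> letter v j < letter v i)}"

lemma finLS: "finite (LS v)" unfolding LS_def by (rule finite_subset[of _ "{..length v}"]) auto
lemma finRS: "finite (RS v)" unfolding RS_def by (rule finite_subset[of _ "{..length v}"]) auto

lemma prefix_max:
  assumes "1 \<le> i" "i \<le> length v"
  shows "\<exists>m. m \<in> LS v \<and> m \<le> i \<and> letter v i \<le> letter v m"
  using assms
proof (induction i rule: less_induct)
  case (less i)
  show ?case
  proof (cases "i \<in> LS v")
    case True then show ?thesis by auto
  next
    case False
    then obtain j where j: "1 \<le> j" "j < i" "letter v j \<ge> letter v i"
      using less.prems unfolding LS_def by (auto simp: not_less)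
    from less.IH[OF j(2) j(1)] less.prems j obtain m where "m \<in> LS v" "m \<le> j" "letter v j \<le> letter v m" by auto
    then show ?thesis using j by (intro exI[of _ m]) auto
  qed
qed

lemma suffix_max:
  assumes "1 \<le> i" "i \<le> length v"
  shows "\<exists>m. m \<in> RS v \<and> i \<le> m \<and> letter v i \<le> letter v m"
  using assms
proof (induction "length v - i" arbitrary: i rule: less_induct)
  case (less i)
  show ?case
  proof (cases "i \<in> RS v")
    case True then show ?thesis by auto
  next
    case False
    then obtain j where j: "i < j" "j \<le> length v" "letter v j \<ge> letter v i"
      using less.prems unfolding RS_def by (auto simp: not_less)
    have "length v - j < length v - i" using j by auto
    from less.hyps[OF this] less.prems j obtain m where "m \<in> RS v" "j \<le> m" "letter v j \<le> letter v m" by auto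
    then show ?thesis using j by (intro exI[of _ m]) auto
  qed
qed

lemma pat5:
  assumes "1 \<le> p1" "p1<p2" "p2<p3" "p3<p4" "p4<p5" "p5 \<le> length v"
    and "length P = 5"
    and "\<forall>k<5. \<forall>l<5. (letter v ([p1,p2,p3,p4,p5]!k) < letter v ([p1,p2,p3,p4,p5]!l)) = (P!k < P!l)"
  shows "contains_pattern P v"
  unfolding contains_pattern_def
proof (rule exI[of _ "map (\<lambda>p. p - 1) [p1,p2,p3,p4,p5]"], intro conjI)
  show "sorted_wrt (<) (map (\<lambda>p. p - 1) [p1, p2, p3, p4, p5])" using assms by auto
  show "\<forall>i\<in>set (map (\<lambda>p. p - 1) [p1, p2, p3, p4, p5]). i < length v" using assms by auto
  have "\<forall>k<5. map (\<lambda>p. p - 1) [p1, p2, p3, p4, p5] ! k = [p1,p2,p3,p4,p5]!k - 1"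
    by (auto simp: less_Suc_eq eval_nat_numeral)
  then show "\<forall>k<length P. \<forall>l<length P. (v ! (map (\<lambda>p. p - 1) [p1, p2, p3, p4, p5] ! k) < v ! (map (\<lambda>p. p - 1) [p1, p2, p3, p4, p5] ! l)) = (P ! k < P ! l)"
    using assms(7,8) by (simp add: letter_def)
qed (use assms in auto)

lemma pat_31425:
  assumes "1 \<le> p1" "p1<p2" "p2<p3" "p3<p4" "p4<p5" "p5 \<le> length v"
   "letter v p2 < letter v p4" "letter v p4 < letter v p1" "letter v p1 < letter v p3" "letter v p3 < letter v p5"
  shows "contains_pattern [3,1,4,2,5] v"
  apply (rule pat5[OF assms(1-6)])
   apply simp
  using assms(7-10) by (auto simp: less_Suc_eq eval_nat_numeral)

lemma pat_32415:
  assumes "1 \<le> p1" "p1<p2" "p2<p3" "p3<p4" "p4<p5" "p5 \<le> length v"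
   "letter v p4 < letter v p2" "letter v p2 < letter v p1" "letter v p1 < letter v p3" "letter v p3 < letter v p5"
  shows "contains_pattern [3,2,4,1,5] v"
  apply (rule pat5[OF assms(1-6)])
   apply simp
  using assms(7-10) by (auto simp: less_Suc_eq eval_nat_numeral)

lemma pat_31524:
  assumes "1 \<le> p1" "p1<p2" "p2<p3" "p3<p4" "p4<p5" "p5 \<le> length v"
   "letter v p2 < letter v p4" "letter v p4 < letter v p1" "letter v p1 < letter v p5" "letter v p5 < letter v p3"
  shows "contains_pattern [3,1,5,2,4] v"
  apply (rule pat5[OF assms(1-6)])
   apply simp
  using assms(7-10) by (auto simp: less_Suc_eq eval_nat_numeral)

lemma pat_32514:
  assumes "1 \<le> p1" "p1<p2" "p2<p3" "p3<p4" "p4<p5" "p5 \<le> length v"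
   "letter v p4 < letter v p2" "letter v p2 < letter v p1" "letter v p1 < letter v p5" "letter v p5 < letter v p3"
  shows "contains_pattern [3,2,5,1,4] v"
  apply (rule pat5[OF assms(1-6)])
   apply simp
  using assms(7-10) by (auto simp: less_Suc_eq eval_nat_numeral)

theorem lemma3p10:
  fixes v :: "nat list"
  defines "a \<equiv> (\<lambda>k. ltr_max_pos v ! (k - 1))"
      and "h \<equiv> length (ltr_max_pos v)"
      and "b \<equiv> (\<lambda>k. rtl_max_pos v ! (k - 1))"
      and "g \<equiv> length (rtl_max_pos v)"
  assumes dist: "distinct v"
      and pos: "\<forall>c\<in>set v. 0 < c"
      and av1: "avoids v [3,1,4,2,5]"
      and av2: "avoids v [3,2,4,1,5]"
      and av3: "avoids v [3,1,5,2,4]"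
      and av4: "avoids v [3,2,5,1,4]"
      and hg: "g > 1"
      and hah: "a h > h"
      and hh: "h > 2"
      and hv: "letter v (a (h - 1)) > letter v (b 2)"
  shows "let x = Max ({j. 1 \<le> j \<and> j < a (h - 1) \<and> letter v j > letter v (j + 1)} \<union> {0}) in
           x = 0
         \<or> (x \<noteq> 0 \<and> a h = a (h - 1) + 1 \<and>
             (letter v (b 2) > letter v x \<longrightarrow>
                (\<forall>j. a h < j \<and> j < b 2 \<longrightarrow> letter v x < letter v j \<and> letter v j < letter v (b 2))))
         \<or> (x \<noteq> 0 \<and> a h > a (h - 1) + 1 \<and>
             (\<forall>j. a (h - 1) < j \<and> j < a h \<longrightarrow> letter v x < letter v j \<and> letter v j < letter v (a (h - 1))) \<and>
             (letter v (b 2) > letter v x \<longrightarrow>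
                (\<forall>j. a h < j \<and> j < b 2 \<longrightarrow> letter v x < letter v j \<and> letter v j < letter v (b 2))))"
proof -
  define L where "L = ltr_max_pos v"
  define B where "B = rtl_max_pos v"
  have L_eq: "L = sorted_list_of_set (LS v)" unfolding L_def ltr_max_pos_def LS_def by simp
  have B_eq: "B = sorted_list_of_set (RS v)" unfolding B_def rtl_max_pos_def RS_def by simp
  have setL: "set L = LS v" using L_eq finLS by simp
  have setB: "set B = RS v" using B_eq finRS by simp
  have sL: "sorted_wrt (<) L" using L_eq strict_sorted_list_of_set by simp
  have sB: "sorted_wrt (<) B" using B_eq strict_sorted_list_of_set by simp
  have hL: "h = length L" unfolding h_def L_def ..
  have gB: "g = length B" unfolding g_def B_def ..
  have aL: "\<And>k. a k = L ! (k - 1)" unfolding a_def L_def ..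
  have bB: "\<And>k. b k = B ! (k - 1)" unfolding b_def B_def ..
  have dv: "\<And>i j. 1 \<le> i \<Longrightarrow> i \<le> length v \<Longrightarrow> 1 \<le> j \<Longrightarrow> j \<le> length v \<Longrightarrow> letter v i = letter v j \<Longrightarrow> i = j"
    using dist unfolding letter_def by (simp add: nth_eq_iff_index_eq)
  define p where "p = a (h - 1)"
  define q where "q = a h"
  have h2: "h - 1 - 1 = h - 2" by simp
  have p_eq: "p = L ! (h - 2)" unfolding p_def aL h2 ..
  have q_eq: "q = L ! (h - 1)" unfolding q_def aL ..
  have hl1: "h - 2 < length L" "h - 1 < length L" using hL hh by auto
  have pS: "p \<in> LS v" using nth_mem[OF hl1(1)] p_eq setL by simp
  have qS: "q \<in> LS v" using nth_mem[OF hl1(2)] q_eq setL by simp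
  have pq: "p < q" using p_eq q_eq sorted_wrt_nth_less[OF sL _ hl1(2), of "h-2"] hh by simp
  have Sle: "m \<le> q" if "m \<in> LS v" for m
  proof -
    obtain k where k: "k < length L" "L ! k = m" using \<open>m \<in> LS v\<close> setL by (metis in_set_conv_nth)
    show ?thesis
    proof (cases "k = h - 1")
      case True then show ?thesis using k q_eq by simp
    next
      case False then have "k < h - 1" using k hL by linarith
      then show ?thesis using k q_eq sorted_wrt_nth_less[OF sL _ hl1(2), of k] by simp
    qed
  qed
  have Sle2: "m \<le> p" if "m \<in> LS v" "m < q" for m
  proof -
    obtain k where k: "k < length L" "L ! k = m" using \<open>m \<in> LS v\<close> setL by (metis in_set_conv_nth)
    have "k \<noteq> h - 1" using k that q_eq by auto
    then have k2: "k \<le> h - 2" using k hL by linarith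
    show ?thesis
    proof (cases "k = h - 2")
      case True then show ?thesis using k p_eq by simp
    next
      case False then have "k < h - 2" using k2 by linarith
      then show ?thesis using k p_eq sorted_wrt_nth_less[OF sL _ hl1(1), of k] by simp
    qed
  qed
  have Slet: "letter v m < letter v m'" if "m \<in> LS v" "m' \<in> LS v" "m < m'" for m m'
    using that unfolding LS_def by auto
  have qlen: "q \<le> length v" "1 \<le> p" using qS pS unfolding LS_def by auto
  have gmax: "letter v i \<le> letter v q" if i1: "1 \<le> i" "i \<le> length v" for i
  proof -
    obtain m where m: "m \<in> LS v" "m \<le> i" "letter v i \<le> letter v m" using prefix_max[OF i1] by auto
    have "letter v m \<le> letter v q" using Sle[OF m(1)] Slet[OF m(1) qS] by (cases "m = q") auto
    then show ?thesis using m by simp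
  qed
  have gmaxs: "letter v i < letter v q" if "1 \<le> i" "i \<le> length v" "i \<noteq> q" for i
    using gmax[OF that(1,2)] dv[OF that(1,2), of q] qlen pq that(3) by (auto simp add: order_le_less)
  have midp: "letter v j < letter v p" if "p < j" "j < q" for j
  proof -
    have j1: "1 \<le> j" "j \<le> length v" using that qlen by auto
    obtain m where m: "m \<in> LS v" "m \<le> j" "letter v j \<le> letter v m" using prefix_max[OF j1] by auto
    have "m \<le> p" using Sle2[OF m(1)] m(2) that by auto
    then have "letter v m \<le> letter v p" using Slet[OF m(1) pS] by (cases "m = p") auto
    moreover have "letter v j \<noteq> letter v p" using dv[OF j1, of p] qlen pq that by auto
    ultimately show ?thesis using m by simp
  qed
  define r where "r = b 2"
  have r_eq: "r = B ! 1" unfolding r_def bB by simp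
  have qR: "q \<in> RS v" using gmaxs qlen pq unfolding RS_def by auto
  have Rge: "q \<le> m" if "m \<in> RS v" for m
  proof (rule ccontr)
    assume "\<not> q \<le> m"
    then have "letter v q < letter v m" using that qR unfolding RS_def by auto
    moreover have "letter v m \<le> letter v q" using gmax that unfolding RS_def by auto
    ultimately show False by simp
  qed
  have gl: "0 < length B" "1 < length B" using gB hg by auto
  have rR: "r \<in> RS v" using nth_mem[OF gl(2)] r_eq setB by simp
  have B0R: "B ! 0 \<in> RS v" using nth_mem[OF gl(1)] setB by simp
  have B0q: "B ! 0 = q"
  proof -
    obtain k' where k': "k' < length B" "B ! k' = q" using qR setB by (metis in_set_conv_nth)
    show ?thesis
    proof (cases "k' = 0")
      case True then show ?thesis using k' by simp
    next
      case False then show ?thesis using k' sorted_wrt_nth_less[OF sB, of 0 k'] Rge[OF B0R] by simp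
    qed
  qed
  have qr: "q < r" using Rge[OF B0R] r_eq sorted_wrt_nth_less[OF sB _ gl(2), of 0] by simp
  have rlen: "r \<le> length v" using rR unfolding RS_def by auto
  have Rge2: "r \<le> m" if "m \<in> RS v" "q < m" for m
  proof -
    obtain k where k: "k < g" "B ! k = m" using \<open>m \<in> RS v\<close> setB gB by (metis in_set_conv_nth)
    have "k \<noteq> 0" using k that B0q by (metis less_irrefl)
    then show ?thesis using r_eq k sorted_wrt_nth_less[OF sB, of 1 k] gB by (cases "k = 1") auto
  qed
  have midr: "letter v j < letter v r" if "q < j" "j < r" for j
  proof -
    have j1: "1 \<le> j" "j \<le> length v" using that rlen qlen pq by auto
    obtain m where m: "m \<in> RS v" "j \<le> m" "letter v j \<le> letter v m" using suffix_max[OF j1] by auto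
    have "r \<le> m" using Rge2[OF m(1)] m(2) that by auto
    then have "letter v m \<le> letter v r" using rR m(1) unfolding RS_def by (cases "m = r") (auto simp: order_le_less)
    moreover have "letter v j \<noteq> letter v r" using dv[OF j1, of r] rlen qr that by auto
    ultimately show ?thesis using m by simp
  qed
  have rq: "letter v r < letter v q" using gmaxs[of r] rlen qr by auto
  define X where "X = {j. 1 \<le> j \<and> j < p \<and> letter v j > letter v (j + 1)} \<union> {0}"
  have finX: "finite X" unfolding X_def by (rule finite_subset[of _ "{..p}"]) auto
  define x where "x = Max X"
  have "x \<in> X" unfolding x_def by (rule Max_in[OF finX]) (simp add: X_def)
  have main: "x = 0 \<or> (x \<noteq> 0 \<and> q = p + 1 \<and> (letter v r > letter v x \<longrightarrow>
                (\<forall>j. q < j \<and> j < r \<longrightarrow> letter v x < letter v j \<and> letter v j < letter v r)))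
         \<or> (x \<noteq> 0 \<and> q > p + 1 \<and>
             (\<forall>j. p < j \<and> j < q \<longrightarrow> letter v x < letter v j \<and> letter v j < letter v p) \<and>
             (letter v r > letter v x \<longrightarrow>
                (\<forall>j. q < j \<and> j < r \<longrightarrow> letter v x < letter v j \<and> letter v j < letter v r)))"
  proof (cases "x = 0")
    case True then show ?thesis by simp
  next
    case False
    then have xnz: "x \<noteq> 0" by simp
    then have x: "1 \<le> x" "x < p" "letter v (x + 1) < letter v x" using \<open>x \<in> X\<close> unfolding X_def by auto
    have xp: "letter v x < letter v p" using pS x unfolding LS_def by auto
    have x1p: "x + 1 < p" using x xp by (cases "x + 1 = p") auto
    have part2: "letter v r > letter v x \<longrightarrow>
                (\<forall>j. q < j \<and> j < r \<longrightarrow> letter v x < letter v j \<and> letter v j < letter v r)"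
    proof (intro impI allI)
      fix j assume rx: "letter v r > letter v x" and j: "q < j \<and> j < r"
      have "letter v j \<noteq> letter v x" using dv[of j x] j x rlen pq qr by auto
      moreover have "\<not> letter v j < letter v x"
      proof
        assume jx: "letter v j < letter v x"
        show False
        proof (cases "letter v j < letter v (x + 1)")
          case True
          have "contains_pattern [3,2,5,1,4] v"
            by (rule pat_32514[of x "x+1" q j r]) (use x x1p pq j rlen midr[of j] rq True jx rx in auto)
          then show False using av4 unfolding avoids_def by simp
        next
          case False
          have "letter v j \<noteq> letter v (x+1)" using dv[of j "x+1"] j x1p rlen pq qr by auto
          with False have "letter v (x+1) < letter v j" by simp
          have "contains_pattern [3,1,5,2,4] v"
            by (rule pat_31524[of x "x+1" q j r]) (use x x1p pq j rlen midr[of j] rq \<open>letter v (x+1) < letter v j\<close> jx rx in auto)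
          then show False using av3 unfolding avoids_def by simp
        qed
      qed
      ultimately show "letter v x < letter v j \<and> letter v j < letter v r" using midr j by auto
    qed
    show ?thesis
    proof (cases "q = p + 1")
      case True then show ?thesis using xnz part2 by (intro disjI2 disjI1 conjI)
    next
      case neq: False
      have part1: "\<forall>j. p < j \<and> j < q \<longrightarrow> letter v x < letter v j \<and> letter v j < letter v p"
      proof (intro impI allI)
        fix j assume j: "p < j \<and> j < q"
        have "letter v j \<noteq> letter v x" using dv[of j x] j x qlen pq by auto
        moreover have "\<not> letter v j < letter v x"
        proof
          assume jx: "letter v j < letter v x"
          have qv: "letter v p < letter v q" using Slet[OF pS qS pq] .
          show False
          proof (cases "letter v j < letter v (x + 1)")
            case True
            have "contains_pattern [3,2,4,1,5] v"
              by (rule pat_32415[of x "x+1" p j q]) (use x x1p pq j qlen xp qv True jx in auto)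
            then show False using av2 unfolding avoids_def by simp
          next
            case False
            have "letter v j \<noteq> letter v (x+1)" using dv[of j "x+1"] j x1p qlen pq by auto
            with False have "letter v (x+1) < letter v j" by simp
            have "contains_pattern [3,1,4,2,5] v"
              by (rule pat_31425[of x "x+1" p j q]) (use x x1p pq j qlen xp qv \<open>letter v (x+1) < letter v j\<close> jx in auto)
            then show False using av1 unfolding avoids_def by simp
          qed
        qed
        ultimately show "letter v x < letter v j \<and> letter v j < letter v p" using midp j by auto
      qed
      have "q > p + 1" using neq pq by simp
      then show ?thesis using xnz part1 part2 by (intro disjI2 conjI)
    qed
  qed
  show ?thesis unfolding Let_def using main unfolding x_def X_def p_def q_def r_def .
qed

end
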